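(* Let $F|R$ be an extension of ordered fields with canonical valuation $v$, and let $D<E$ be non-empty subsets of $R$. Assume that either $(D,E)$ is a non-ball cut in $R$ with $\mathrm{Betw}_F(D,E)\neq\emptyset$, or $(D,E)$ is a ball complement in $R$. Then $\mathrm{Betw}_F(D,E)=B_S(a,F)$ for each $a\in\mathrm{Betw}_F(D,E)$, where $S$ is the largest final segment of $vF$ disjoint from $v(E-D)$ (equivalently, the largest subset $S$ of $vF$ with $S>v(E-D)$).
   Context: The canonical valuation $v$ of an ordered field has as valuation ring the convex hull of $\mathbb Z$. $\mathrm{Betw}_F(D,E)=\{c\in F\mid D<c<E\}$ and $v(E-D)=\{v(e-d)\mid e\in E,d\in D\}$. For an ordered field $K$, $a\in K$ and a final segment $S$ of $vK$ (possibly empty), $B_S(a,K)=\{b\in K\mid v(a-b)\in S\cup\{\infty\}\}$ is a ball. A ball complement of a ball $B$ of $R$ is a pair $(D,E)$ with $D<B<E$ and $D\cup B\cup E=R$. A cut of $R$ is a pair $(D,E)$ with $D<E$ and $D\cup E=R$; for nonempty $A\subseteq R$, $A^+=(D,R\setminus D)$ with $D$ the smallest initial segment containing $A$, and $A^-=(R\setminus E,E)$ with $E$ the smallest final segment containing $A$; a cut is a ball cut if it is $B^+$ or $B^-$ for some ball $B$, and a non-ball cut otherwise. *)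

theory Defs
  imports Main
begin

text \<open>The ordered field F is the type 'a (class linordered_field); R is an ordered
subfield given as a subset carrying the induced order.
Canonical valuation: v x \<le> v y iff y/x lies in the convex hull O of Z, i.e.
|y| \<le> n |x| for some natural n. The value v x is represented by the
archimedean class of x; v 0 = {0} plays the role of infinity.\<close>

definition subfield :: "'a::linordered_field set \<Rightarrow> bool" where
  "subfield R \<longleftrightarrow> 0 \<in> R \<and> 1 \<in> R \<and> (\<forall>x\<in>R. \<forall>y\<in>R. x + y \<in> R \<and> x * y \<in> R)
     \<and> (\<forall>x\<in>R. - x \<in> R \<and> inverse x \<in> R)"

definition vle :: "'a::linordered_field \<Rightarrow> 'a \<Rightarrow> bool" where
  "vle x y \<longleftrightarrow> (\<exists>n::nat. \<bar>y\<bar> \<le> of_nat n * \<bar>x\<bar>)"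

definition vval :: "'a::linordered_field \<Rightarrow> 'a set" where
  "vval x = {y. vle x y \<and> vle y x}"

definition vgroup :: "'a::linordered_field set \<Rightarrow> 'a set set" where
  "vgroup K = vval ` (K - {0})"

definition vclass_le :: "'a::linordered_field set \<Rightarrow> 'a set \<Rightarrow> bool" where
  "vclass_le A B \<longleftrightarrow> (\<exists>x\<in>A. \<exists>y\<in>B. vle x y)"

definition vclass_less :: "'a::linordered_field set \<Rightarrow> 'a set \<Rightarrow> bool" where
  "vclass_less A B \<longleftrightarrow> vclass_le A B \<and> A \<noteq> B"

definition final_segment :: "'a::linordered_field set set \<Rightarrow> 'a set set \<Rightarrow> bool" where
  "final_segment G S \<longleftrightarrow> S \<subseteq> G \<and> (\<forall>\<gamma>\<in>S. \<forall>\<delta>\<in>G. vclass_le \<gamma> \<delta> \<longrightarrow> \<delta> \<in> S)"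

definition ballV :: "'a::linordered_field set \<Rightarrow> 'a set set \<Rightarrow> 'a \<Rightarrow> 'a set" where
  "ballV K S a = {b\<in>K. a - b = 0 \<or> vval (a - b) \<in> S}"

definition is_ball :: "'a::linordered_field set \<Rightarrow> 'a set \<Rightarrow> bool" where
  "is_ball K B \<longleftrightarrow> (\<exists>a\<in>K. \<exists>S. final_segment (vgroup K) S \<and> B = ballV K S a)"

definition Betw :: "'a::linordered_field set \<Rightarrow> 'a set \<Rightarrow> 'a set \<Rightarrow> 'a set" where
  "Betw F D E = {c\<in>F. (\<forall>d\<in>D. d < c) \<and> (\<forall>e\<in>E. c < e)}"

definition vdiff :: "'a::linordered_field set \<Rightarrow> 'a set \<Rightarrow> 'a set set" where
  "vdiff E D = {vval (e - d) | e d. e \<in> E \<and> d \<in> D}"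

definition set_less :: "'a::linordered_field set \<Rightarrow> 'a set \<Rightarrow> bool" where
  "set_less A B \<longleftrightarrow> (\<forall>x\<in>A. \<forall>y\<in>B. x < y)"

definition is_cut :: "'a::linordered_field set \<Rightarrow> 'a set \<Rightarrow> 'a set \<Rightarrow> bool" where
  "is_cut R D E \<longleftrightarrow> set_less D E \<and> D \<union> E = R"

definition upper_cut :: "'a::linordered_field set \<Rightarrow> 'a set \<Rightarrow> 'a set \<times> 'a set" where
  "upper_cut R A = (let D = {x\<in>R. \<exists>a\<in>A. x \<le> a} in (D, R - D))"

definition lower_cut :: "'a::linordered_field set \<Rightarrow> 'a set \<Rightarrow> 'a set \<times> 'a set" where
  "lower_cut R A = (let E = {x\<in>R. \<exists>a\<in>A. a \<le> x} in (R - E, E))"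

definition ball_cut :: "'a::linordered_field set \<Rightarrow> 'a set \<Rightarrow> 'a set \<Rightarrow> bool" where
  "ball_cut R D E \<longleftrightarrow> is_cut R D E \<and>
     (\<exists>B. is_ball R B \<and> ((D, E) = upper_cut R B \<or> (D, E) = lower_cut R B))"

definition non_ball_cut :: "'a::linordered_field set \<Rightarrow> 'a set \<Rightarrow> 'a set \<Rightarrow> bool" where
  "non_ball_cut R D E \<longleftrightarrow> is_cut R D E \<and> \<not> ball_cut R D E"

definition ball_complement ::
  "'a::linordered_field set \<Rightarrow> 'a set \<Rightarrow> 'a set \<Rightarrow> 'a set \<Rightarrow> bool" where
  "ball_complement R B D E \<longleftrightarrow> set_less D B \<and> set_less B E \<and> D \<union> B \<union> E = R"

end

theory Submission
  imports Defs
begin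


lemma vle_refl: "vle x (x::'a::linordered_field)"
  unfolding vle_def by (rule exI[of _ 1]) simp

lemma vle_trans:
  assumes "vle x y" "vle y (z::'a::linordered_field)" shows "vle x z"
proof -
  obtain n where n: "\<bar>y\<bar> \<le> of_nat n * \<bar>x\<bar>" using assms(1) unfolding vle_def by blast
  obtain m where m: "\<bar>z\<bar> \<le> of_nat m * \<bar>y\<bar>" using assms(2) unfolding vle_def by blast
  have "of_nat m * \<bar>y\<bar> \<le> of_nat m * (of_nat n * \<bar>x\<bar>)"
    using n by (simp add: mult_left_mono)
  hence "\<bar>z\<bar> \<le> of_nat (m*n) * \<bar>x\<bar>" using m by (simp add: mult.assoc)
  thus ?thesis unfolding vle_def by blast
qed

lemma vval_eq_iff: "vval x = vval (y::'a::linordered_field) \<longleftrightarrow> vle x y \<and> vle y x"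
proof
  assume "vval x = vval y"
  moreover have "y \<in> vval y" unfolding vval_def using vle_refl by blast
  ultimately show "vle x y \<and> vle y x" unfolding vval_def by blast
next
  assume "vle x y \<and> vle y x"
  thus "vval x = vval y" unfolding vval_def using vle_trans by blast
qed

lemma vclass_le_iff: "vclass_le (vval x) (vval y) \<longleftrightarrow> vle x (y::'a::linordered_field)"
proof
  assume "vclass_le (vval x) (vval y)"
  then obtain x' y' where "x' \<in> vval x" "y' \<in> vval y" "vle x' y'" unfolding vclass_le_def by blast
  thus "vle x y" unfolding vval_def using vle_trans by blast
next
  assume "vle x y"
  thus "vclass_le (vval x) (vval y)" unfolding vclass_le_def vval_def using vle_refl by blast
qed

lemma vclass_less_iff:
  "vclass_less (vval x) (vval y) \<longleftrightarrow> (\<forall>n::nat. of_nat n * \<bar>y\<bar> < \<bar>x::'a::linordered_field\<bar>)"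
proof -
  have "vclass_less (vval x) (vval y) \<longleftrightarrow> vle x y \<and> \<not> vle y x"
    unfolding vclass_less_def vclass_le_iff vval_eq_iff by blast
  also have "\<not> vle y x \<longleftrightarrow> (\<forall>n::nat. of_nat n * \<bar>y\<bar> < \<bar>x\<bar>)"
    unfolding vle_def by (auto simp: not_le)
  also have "vle x y \<and> (\<forall>n::nat. of_nat n * \<bar>y\<bar> < \<bar>x\<bar>) \<longleftrightarrow> (\<forall>n::nat. of_nat n * \<bar>y\<bar> < \<bar>x\<bar>)"
  proof (intro iffI conjI)
    assume "\<forall>n::nat. of_nat n * \<bar>y\<bar> < \<bar>x\<bar>"
    hence "of_nat 1 * \<bar>y\<bar> < \<bar>x\<bar>" by blast
    thus "vle x y" unfolding vle_def by (intro exI[of _ 1]) simp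
  qed auto
  finally show ?thesis .
qed

lemma vclass_less_le_trans:
  assumes "vclass_less (vval x) (vval g)" "vclass_le (vval g) (vval h)"
  shows "vclass_less (vval x) (vval (h::'a::linordered_field))"
proof -
  obtain m where m: "\<bar>h\<bar> \<le> of_nat m * \<bar>g\<bar>" using assms(2) unfolding vclass_le_iff vle_def by blast
  have g: "\<forall>n::nat. of_nat n * \<bar>g\<bar> < \<bar>x\<bar>" using assms(1) unfolding vclass_less_iff .
  show ?thesis unfolding vclass_less_iff
  proof
    fix n :: nat
    have "of_nat n * \<bar>h\<bar> \<le> of_nat n * (of_nat m * \<bar>g\<bar>)" using m by (simp add: mult_left_mono)
    also have "\<dots> = of_nat (n*m) * \<bar>g\<bar>" by (simp add: mult.assoc)
    also have "\<dots> < \<bar>x\<bar>" using g by blast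
    finally show "of_nat n * \<bar>h\<bar> < \<bar>x\<bar>" .
  qed
qed

lemma mem_S:
  assumes "x \<noteq> 0" "x \<in> K"
  shows "vval x \<in> {\<gamma>\<in>vgroup K. \<forall>\<delta>\<in>vdiff E D. vclass_less \<delta> \<gamma>}
     \<longleftrightarrow> (\<forall>e\<in>E. \<forall>d\<in>D. \<forall>n::nat. of_nat n * \<bar>x\<bar> < \<bar>e - d::'a::linordered_field\<bar>)"
proof -
  have "vval x \<in> vgroup K" using assms unfolding vgroup_def by blast
  have "(\<forall>\<delta>\<in>vdiff E D. vclass_less \<delta> (vval x)) \<longleftrightarrow>
     (\<forall>e\<in>E. \<forall>d\<in>D. vclass_less (vval (e-d)) (vval x))"
    unfolding vdiff_def by blast
  with \<open>vval x \<in> vgroup K\<close> show ?thesis by (simp add: vclass_less_iff)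
qed



lemma halving_iter:
  fixes D E :: "'a::linordered_field set"
  assumes H: "\<forall>d\<in>D. \<forall>e\<in>E. \<exists>d'\<in>D. \<exists>e'\<in>E. 2 * (e' - d') \<le> e - d"
  shows "d \<in> D \<Longrightarrow> e \<in> E \<Longrightarrow> \<exists>d'\<in>D. \<exists>e'\<in>E. 2 ^ k * (e' - d') \<le> e - d"
proof (induction k)
  case 0 thus ?case by auto
next
  case (Suc k)
  then obtain d1 e1 where d1: "d1 \<in> D" "e1 \<in> E" "2 ^ k * (e1 - d1) \<le> e - d" by blast
  then obtain d' e' where d': "d' \<in> D" "e' \<in> E" "2 * (e' - d') \<le> e1 - d1" using H by blast
  have "2 ^ Suc k * (e' - d') = 2 ^ k * (2 * (e' - d'))" by simp
  also have "\<dots> \<le> 2 ^ k * (e1 - d1)" using d'(3) by (simp add: mult_left_mono)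
  finally have "2 ^ Suc k * (e' - d') \<le> e - d" using d1(3) by linarith
  thus ?case using d' by blast
qed

lemma core:
  fixes D E :: "'a::linordered_field set"
  assumes DE: "set_less D E"
    and H: "\<forall>d\<in>D. \<forall>e\<in>E. \<exists>d'\<in>D. \<exists>e'\<in>E. 2 * (e' - d') \<le> e - d"
    and PD: "\<forall>d\<in>D. \<exists>d'\<in>D. \<exists>e\<in>E. \<exists>d''\<in>D. \<exists>n::nat. d < d' \<and> e - d'' \<le> of_nat n * (d' - d)"
    and PE: "\<forall>e\<in>E. \<exists>e'\<in>E. \<exists>e''\<in>E. \<exists>d''\<in>D. \<exists>n::nat. e' < e \<and> e'' - d'' \<le> of_nat n * (e - e')"
    and a: "a \<in> Betw UNIV D E"
  shows "Betw UNIV D E = ballV UNIV {\<gamma>\<in>vgroup UNIV. \<forall>\<delta>\<in>vdiff E D. vclass_less \<delta> \<gamma>} a"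
proof -
  let ?S = "{\<gamma>\<in>vgroup UNIV. \<forall>\<delta>\<in>vdiff E D. vclass_less \<delta> \<gamma>}"
  have mem: "b \<in> ballV UNIV ?S a \<longleftrightarrow> a - b = 0 \<or> (\<forall>e\<in>E. \<forall>d\<in>D. \<forall>n::nat. of_nat n * \<bar>a - b\<bar> < e - d)" for b
  proof (cases "a - b = 0")
    case True thus ?thesis unfolding ballV_def by simp
  next
    case False
    have "\<forall>e\<in>E. \<forall>d\<in>D. \<bar>e - d\<bar> = e - d" using DE unfolding set_less_def by fastforce
    thus ?thesis using mem_S[OF False, of UNIV E D] False unfolding ballV_def by auto
  qed
  have aD: "\<forall>d\<in>D. d < a" and aE: "\<forall>e\<in>E. a < e" using a unfolding Betw_def by auto
  show ?thesis
  proof (rule set_eqI)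
    fix b
    show "b \<in> Betw UNIV D E \<longleftrightarrow> b \<in> ballV UNIV ?S a"
    proof
      assume b: "b \<in> Betw UNIV D E"
      hence bD: "\<forall>d\<in>D. d < b" and bE: "\<forall>e\<in>E. b < e" unfolding Betw_def by auto
      have "\<forall>e\<in>E. \<forall>d\<in>D. \<forall>n::nat. of_nat n * \<bar>a - b\<bar> < e - d"
      proof (intro ballI allI)
        fix e d n assume e: "e \<in> E" and d: "d \<in> D"
        obtain d' e' where d': "d' \<in> D" "e' \<in> E" "2 ^ n * (e' - d') \<le> e - d"
          using halving_iter[OF H d e] by blast
        have "d' < a" "a < e'" "d' < b" "b < e'" using aD aE bD bE d' by auto
        hence ab: "\<bar>a - b\<bar> < e' - d'" by (simp add: abs_if)
        have "(of_nat n :: 'a) \<le> of_nat (2 ^ n)" by (simp add: less_exp less_imp_le)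
        hence n2: "(of_nat n :: 'a) \<le> 2 ^ n" by simp
        have "of_nat n * \<bar>a - b\<bar> \<le> 2 ^ n * \<bar>a - b\<bar>" using n2 by (simp add: mult_right_mono)
        also have "\<dots> < 2 ^ n * (e' - d')" using ab by simp
        also have "\<dots> \<le> e - d" by fact
        finally show "of_nat n * \<bar>a - b\<bar> < e - d" .
      qed
      thus "b \<in> ballV UNIV ?S a" using mem by blast
    next
      assume "b \<in> ballV UNIV ?S a"
      hence bb: "a - b = 0 \<or> (\<forall>e\<in>E. \<forall>d\<in>D. \<forall>n::nat. of_nat n * \<bar>a - b\<bar> < e - d)" using mem by blast
      show "b \<in> Betw UNIV D E"
      proof (cases "a - b = 0")
        case True thus ?thesis using a by simp
      next
        case False
        hence sm: "\<forall>e\<in>E. \<forall>d\<in>D. \<forall>n::nat. of_nat n * \<bar>a - b\<bar> < e - d" using bb by blast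
        have "d < b" if d: "d \<in> D" for d
        proof -
          obtain d' e d'' n where x: "d' \<in> D" "e \<in> E" "d'' \<in> D" "d < d'"
            "e - d'' \<le> of_nat n * (d' - d)" using PD d by blast
          have "of_nat n * \<bar>a - b\<bar> < e - d''" using sm x by blast
          hence "of_nat n * \<bar>a - b\<bar> < of_nat n * (d' - d)" using x(5) by linarith
          hence "\<bar>a - b\<bar> < d' - d"
            by (meson mult_left_mono not_le of_nat_0_le_iff)
          moreover have "d' < a" using aD x by blast
          ultimately show ?thesis by (auto simp: abs_if split: if_splits)
        qed
        moreover have "b < e" if e: "e \<in> E" for e
        proof -
          obtain e' e'' d'' n where x: "e' \<in> E" "e'' \<in> E" "d'' \<in> D" "e' < e"
            "e'' - d'' \<le> of_nat n * (e - e')" using PE e by blast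
          have "of_nat n * \<bar>a - b\<bar> < e'' - d''" using sm x by blast
          hence "of_nat n * \<bar>a - b\<bar> < of_nat n * (e - e')" using x(5) by linarith
          hence "\<bar>a - b\<bar> < e - e'"
            by (meson mult_left_mono not_le of_nat_0_le_iff)
          moreover have "a < e'" using aE x by blast
          ultimately show ?thesis by (auto simp: abs_if split: if_splits)
        qed
        ultimately show ?thesis unfolding Betw_def by auto
      qed
    qed
  qed
qed



lemma sf_add: "subfield R \<Longrightarrow> x \<in> R \<Longrightarrow> y \<in> R \<Longrightarrow> x + y \<in> R"
  unfolding subfield_def by blast
lemma sf_mult: "subfield R \<Longrightarrow> x \<in> R \<Longrightarrow> y \<in> R \<Longrightarrow> x * y \<in> R"
  unfolding subfield_def by blast
lemma sf_uminus: "subfield R \<Longrightarrow> x \<in> R \<Longrightarrow> - x \<in> R"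
  unfolding subfield_def by blast
lemma sf_diff: "subfield R \<Longrightarrow> x \<in> R \<Longrightarrow> y \<in> R \<Longrightarrow> x - y \<in> R"
  using sf_add[of R x "-y"] sf_uminus[of R y] by simp
lemma sf_half: "subfield R \<Longrightarrow> x \<in> R \<Longrightarrow> y \<in> R \<Longrightarrow> (x + y) / 2 \<in> R"
proof -
  assume R: "subfield R" "x \<in> R" "y \<in> R"
  have "1 \<in> R" using R(1) unfolding subfield_def by blast
  hence "1 + 1 \<in> R" using sf_add[OF R(1)] by blast
  hence two: "2 \<in> R" by (simp only: one_add_one)
  have "\<forall>z\<in>R. inverse z \<in> R" using R(1) unfolding subfield_def by blast
  hence "inverse 2 \<in> R" using two by blast
  hence "(x + y) * inverse 2 \<in> R" using sf_mult[OF R(1) sf_add[OF R]] by blast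
  thus ?thesis by (simp only: divide_inverse)
qed

lemma vval_half: "vval ((x::'a::linordered_field) / 2) = vval x"
proof -
  have a: "\<bar>x\<bar> \<le> of_nat 2 * \<bar>x / 2\<bar>" by simp
  have b: "\<bar>x / 2\<bar> \<le> of_nat 1 * \<bar>x\<bar>" by simp
  show ?thesis unfolding vval_eq_iff vle_def using a b by blast
qed

lemma vval_neg: "vval (- (x::'a::linordered_field)) = vval x"
proof -
  have b: "\<bar>- x\<bar> \<le> of_nat 1 * \<bar>x\<bar>" "\<bar>x\<bar> \<le> of_nat 1 * \<bar>-x\<bar>" by simp_all
  show ?thesis unfolding vval_eq_iff vle_def using b by blast
qed

lemma ball_char:
  fixes D E R :: "'a::linordered_field set"
  assumes R: "subfield R" and DE: "set_less D E" and dR: "d \<in> R"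
  shows "x \<in> ballV R {\<gamma>\<in>vgroup R. \<forall>\<delta>\<in>vdiff E D. vclass_less \<delta> \<gamma>} d \<longleftrightarrow>
     x \<in> R \<and> (\<forall>e\<in>E. \<forall>d''\<in>D. \<forall>n::nat. of_nat n * \<bar>d - x\<bar> < e - d'')"
proof (cases "x \<in> R")
  case xR: True
  have pos: "\<forall>e\<in>E. \<forall>d\<in>D. \<bar>e - d\<bar> = e - d \<and> 0 < e - d" using DE unfolding set_less_def by fastforce
  show ?thesis
  proof (cases "d - x = 0")
    case True thus ?thesis using xR pos unfolding ballV_def by simp
  next
    case False
    have "d - x \<in> R" using sf_diff[OF R dR xR] .
    have eq: "(\<forall>e\<in>E. \<forall>d''\<in>D. \<forall>n::nat. of_nat n * \<bar>d - x\<bar> < \<bar>e - d''\<bar>) \<longleftrightarrow>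
        (\<forall>e\<in>E. \<forall>d''\<in>D. \<forall>n::nat. of_nat n * \<bar>d - x\<bar> < e - d'')" using pos by simp
    show ?thesis using mem_S[OF False \<open>d - x \<in> R\<close>, of E D] eq False xR unfolding ballV_def by simp
  qed
next
  case False thus ?thesis unfolding ballV_def by simp
qed

lemma S_final:
  fixes D E R :: "'a::linordered_field set"
  shows "final_segment (vgroup R) {\<gamma>\<in>vgroup R. \<forall>\<delta>\<in>vdiff E D. vclass_less \<delta> \<gamma>}"
proof -
  have "\<delta> \<in> {\<gamma>\<in>vgroup R. \<forall>\<delta>\<in>vdiff E D. vclass_less \<delta> \<gamma>}"
    if g: "\<gamma> \<in> {\<gamma>\<in>vgroup R. \<forall>\<delta>\<in>vdiff E D. vclass_less \<delta> \<gamma>}" and dl: "\<delta> \<in> vgroup R"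
    and le: "vclass_le \<gamma> \<delta>" for \<gamma> \<delta>
  proof -
    obtain g0 where g0: "\<gamma> = vval g0" using g unfolding vgroup_def by blast
    obtain h0 where h0: "\<delta> = vval h0" using dl unfolding vgroup_def by blast
    have gl: "\<forall>\<epsilon>\<in>vdiff E D. vclass_less \<epsilon> \<gamma>" using g by blast
    have "vclass_less \<epsilon> \<delta>" if ep: "\<epsilon> \<in> vdiff E D" for \<epsilon>
    proof -
      obtain x where x: "\<epsilon> = vval x" using ep unfolding vdiff_def by blast
      have "vclass_less (vval x) (vval g0)" using gl ep unfolding x g0 by blast
      moreover have "vclass_le (vval g0) (vval h0)" using le unfolding g0 h0 .
      ultimately show ?thesis unfolding x h0 by (rule vclass_less_le_trans)
    qed
    thus ?thesis using dl by blast
  qed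
  thus ?thesis unfolding final_segment_def by blast
qed



lemma nonball_PD:
  fixes D E R :: "'a::linordered_field set"
  assumes R: "subfield R" and nb: "non_ball_cut R D E"
  shows "\<forall>d\<in>D. \<exists>d'\<in>D. \<exists>e\<in>E. \<exists>d''\<in>D. \<exists>n::nat. d < d' \<and> e - d'' \<le> of_nat n * (d' - d)"
proof (rule ccontr)
  assume "\<not> ?thesis"
  then obtain d where d: "d \<in> D" and
    H: "\<And>d' e d'' n. d' \<in> D \<Longrightarrow> e \<in> E \<Longrightarrow> d'' \<in> D \<Longrightarrow> d < d' \<Longrightarrow> of_nat n * (d' - d) < e - d''"
    by (meson not_le)
  have cut: "set_less D E" "D \<union> E = R" using nb unfolding non_ball_cut_def is_cut_def by auto
  have lt: "x < y" if "x \<in> D" "y \<in> E" for x y using cut(1) that unfolding set_less_def by blast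
  have dR: "d \<in> R" using d cut by blast
  define S where "S = {\<gamma>\<in>vgroup R. \<forall>\<delta>\<in>vdiff E D. vclass_less \<delta> \<gamma>}"
  define B where "B = ballV R S d"
  have Bc: "x \<in> B \<longleftrightarrow> x \<in> R \<and> (\<forall>e\<in>E. \<forall>d''\<in>D. \<forall>n::nat. of_nat n * \<bar>d - x\<bar> < e - d'')" for x
    unfolding B_def S_def using ball_char[OF R cut(1) dR] .
  have isb: "is_ball R B" unfolding is_ball_def B_def using dR S_final[of R E D] unfolding S_def by blast
  have BD: "B \<subseteq> D"
  proof
    fix y assume y: "y \<in> B"
    hence yR: "y \<in> R" using Bc by blast
    show "y \<in> D"
    proof (rule ccontr)
      assume "y \<notin> D"
      hence yE: "y \<in> E" using yR cut by blast
      have "of_nat 1 * \<bar>d - y\<bar> < y - d" using y yE d Bc by blast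
      moreover have "d < y" using lt d yE by blast
      ultimately show False by simp
    qed
  qed
  have D'eq: "{x\<in>R. \<exists>y\<in>B. x \<le> y} = D"
  proof (intro set_eqI iffI)
    fix x assume "x \<in> {x\<in>R. \<exists>y\<in>B. x \<le> y}"
    then obtain y where "x \<in> R" "y \<in> B" "x \<le> y" by blast
    hence "y \<in> D" using BD by blast
    show "x \<in> D"
    proof (rule ccontr)
      assume "x \<notin> D"
      hence "x \<in> E" using \<open>x \<in> R\<close> cut by blast
      hence "y < x" using lt \<open>y \<in> D\<close> by blast
      thus False using \<open>x \<le> y\<close> by simp
    qed
  next
    fix x assume x: "x \<in> D"
    hence xR: "x \<in> R" using cut by blast
    show "x \<in> {x\<in>R. \<exists>y\<in>B. x \<le> y}"
    proof (cases "x \<le> d")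
      case True
      have "\<forall>e\<in>E. \<forall>d''\<in>D. \<forall>n::nat. of_nat n * \<bar>d - d\<bar> < e - d''" using lt by simp
      hence "d \<in> B" using Bc dR by blast
      thus ?thesis using True xR by blast
    next
      case False
      have "\<forall>e\<in>E. \<forall>d''\<in>D. \<forall>n::nat. of_nat n * \<bar>d - x\<bar> < e - d''"
      proof (intro ballI allI)
        fix e d'' n assume "e \<in> E" "d'' \<in> D"
        have "of_nat n * (x - d) < e - d''" using H[OF x \<open>e \<in> E\<close> \<open>d'' \<in> D\<close>] False by simp
        thus "of_nat n * \<bar>d - x\<bar> < e - d''" using False by simp
      qed
      hence "x \<in> B" using Bc xR by blast
      thus ?thesis using xR by blast
    qed
  qed
  have "R - D = E" using cut lt by fastforce
  hence "(D, E) = upper_cut R B" unfolding upper_cut_def Let_def D'eq by simp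
  hence "ball_cut R D E" using isb nb unfolding ball_cut_def non_ball_cut_def by blast
  thus False using nb unfolding non_ball_cut_def by blast
qed

lemma nonball_PE:
  fixes D E R :: "'a::linordered_field set"
  assumes R: "subfield R" and nb: "non_ball_cut R D E"
  shows "\<forall>e\<in>E. \<exists>e'\<in>E. \<exists>e''\<in>E. \<exists>d''\<in>D. \<exists>n::nat. e' < e \<and> e'' - d'' \<le> of_nat n * (e - e')"
proof (rule ccontr)
  assume "\<not> ?thesis"
  then obtain d where d: "d \<in> E" and
    H: "\<And>d' e d'' n. d' \<in> E \<Longrightarrow> e \<in> E \<Longrightarrow> d'' \<in> D \<Longrightarrow> d' < d \<Longrightarrow> of_nat n * (d - d') < e - d''"
    by (meson not_le)
  have cut: "set_less D E" "D \<union> E = R" using nb unfolding non_ball_cut_def is_cut_def by auto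
  have lt: "x < y" if "x \<in> D" "y \<in> E" for x y using cut(1) that unfolding set_less_def by blast
  have dR: "d \<in> R" using d cut by blast
  define S where "S = {\<gamma>\<in>vgroup R. \<forall>\<delta>\<in>vdiff E D. vclass_less \<delta> \<gamma>}"
  define B where "B = ballV R S d"
  have Bc: "x \<in> B \<longleftrightarrow> x \<in> R \<and> (\<forall>e\<in>E. \<forall>d''\<in>D. \<forall>n::nat. of_nat n * \<bar>d - x\<bar> < e - d'')" for x
    unfolding B_def S_def using ball_char[OF R cut(1) dR] .
  have isb: "is_ball R B" unfolding is_ball_def B_def using dR S_final[of R E D] unfolding S_def by blast
  have BE: "B \<subseteq> E"
  proof
    fix y assume y: "y \<in> B"
    hence yR: "y \<in> R" using Bc by blast
    show "y \<in> E"
    proof (rule ccontr)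
      assume "y \<notin> E"
      hence yD: "y \<in> D" using yR cut by blast
      have "of_nat 1 * \<bar>d - y\<bar> < d - y" using y yD d Bc by blast
      moreover have "y < d" using lt d yD by blast
      ultimately show False by simp
    qed
  qed
  have D'eq: "{x\<in>R. \<exists>y\<in>B. y \<le> x} = E"
  proof (intro set_eqI iffI)
    fix x assume "x \<in> {x\<in>R. \<exists>y\<in>B. y \<le> x}"
    then obtain y where "x \<in> R" "y \<in> B" "y \<le> x" by blast
    hence "y \<in> E" using BE by blast
    show "x \<in> E"
    proof (rule ccontr)
      assume "x \<notin> E"
      hence "x \<in> D" using \<open>x \<in> R\<close> cut by blast
      hence "x < y" using lt \<open>y \<in> E\<close> by blast
      thus False using \<open>y \<le> x\<close> by simp
    qed
  next
    fix x assume x: "x \<in> E"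
    hence xR: "x \<in> R" using cut by blast
    show "x \<in> {x\<in>R. \<exists>y\<in>B. y \<le> x}"
    proof (cases "d \<le> x")
      case True
      have "\<forall>e\<in>E. \<forall>d''\<in>D. \<forall>n::nat. of_nat n * \<bar>d - d\<bar> < e - d''" using lt by simp
      hence "d \<in> B" using Bc dR by blast
      thus ?thesis using True xR by blast
    next
      case False
      have "\<forall>e\<in>E. \<forall>d''\<in>D. \<forall>n::nat. of_nat n * \<bar>d - x\<bar> < e - d''"
      proof (intro ballI allI)
        fix e d'' n assume "e \<in> E" "d'' \<in> D"
        have "of_nat n * (d - x) < e - d''" using H[OF x \<open>e \<in> E\<close> \<open>d'' \<in> D\<close>] False by simp
        thus "of_nat n * \<bar>d - x\<bar> < e - d''" using False by simp
      qed
      hence "x \<in> B" using Bc xR by blast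
      thus ?thesis using xR by blast
    qed
  qed
  have "R - E = D" using cut lt by fastforce
  hence "(D, E) = lower_cut R B" unfolding lower_cut_def Let_def D'eq by simp
  hence "ball_cut R D E" using isb nb unfolding ball_cut_def non_ball_cut_def by blast
  thus False using nb unfolding non_ball_cut_def by blast
qed

lemma nonball_half:
  fixes D E R :: "'a::linordered_field set"
  assumes R: "subfield R" and nb: "non_ball_cut R D E"
  shows "\<forall>d\<in>D. \<forall>e\<in>E. \<exists>d'\<in>D. \<exists>e'\<in>E. 2 * (e' - d') \<le> e - d"
proof (intro ballI)
  fix d e assume d: "d \<in> D" and e: "e \<in> E"
  have cut: "set_less D E" "D \<union> E = R" using nb unfolding non_ball_cut_def is_cut_def by auto
  have "(d + e) / 2 \<in> R" using sf_half[OF R] d e cut by blast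
  hence "(d + e) / 2 \<in> D \<or> (d + e) / 2 \<in> E" using cut by blast
  thus "\<exists>d'\<in>D. \<exists>e'\<in>E. 2 * (e' - d') \<le> e - d"
  proof
    assume "(d + e) / 2 \<in> D"
    moreover have "2 * (e - (d + e) / 2) \<le> e - d" by (simp add: field_simps)
    ultimately show ?thesis using e by blast
  next
    assume "(d + e) / 2 \<in> E"
    moreover have "2 * ((d + e) / 2 - d) \<le> e - d" by (simp add: field_simps)
    ultimately show ?thesis using d by blast
  qed
qed



lemma bc_props:
  fixes D E R B :: "'a::linordered_field set"
  assumes R: "subfield R" and isb: "is_ball R B" and bc: "ball_complement R B D E"
  shows "(\<forall>d\<in>D. \<forall>e\<in>E. \<exists>d'\<in>D. \<exists>e'\<in>E. 2 * (e' - d') \<le> e - d)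
    \<and> (\<forall>d\<in>D. \<exists>d'\<in>D. \<exists>e\<in>E. \<exists>d''\<in>D. \<exists>n::nat. d < d' \<and> e - d'' \<le> of_nat n * (d' - d))
    \<and> (\<forall>e\<in>E. \<exists>e'\<in>E. \<exists>e''\<in>E. \<exists>d''\<in>D. \<exists>n::nat. e' < e \<and> e'' - d'' \<le> of_nat n * (e - e'))"
proof -
  obtain c S0 where c: "c \<in> R" and B: "B = ballV R S0 c" using isb unfolding is_ball_def by blast
  have cB: "c \<in> B" using c B unfolding ballV_def by simp
  have U: "D \<union> B \<union> E = R" using bc unfolding ball_complement_def by blast
  have dc: "d < c" if "d \<in> D" for d using bc cB that unfolding ball_complement_def set_less_def by blast
  have ce: "c < e" if "e \<in> E" for e using bc cB that unfolding ball_complement_def set_less_def by blast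
  have DnB: "d \<notin> B" if "d \<in> D" for d using bc that unfolding ball_complement_def set_less_def by blast
  have EnB: "e \<notin> B" if "e \<in> E" for e using bc that unfolding ball_complement_def set_less_def by blast
  have transfer: "y \<notin> B" if "x \<in> R" "x \<notin> B" "vval (c - y) = vval (c - x)" "c - y \<noteq> 0" for x y
    using that unfolding B ballV_def by auto
  have inD: "y \<in> D" if "y \<in> R" "y \<notin> B" "y < c" for y
    using that U ce by fastforce
  have inE: "y \<in> E" if "y \<in> R" "y \<notin> B" "c < y" for y
    using that U dc by fastforce
  have Dm: "(d + c) / 2 \<in> D" if d: "d \<in> D" for d
  proof -
    have dR: "d \<in> R" using d U by blast
    have "c - (d + c) / 2 = (c - d) / 2" by (simp add: field_simps)
    hence "vval (c - (d + c) / 2) = vval ((c - d) / 2)" by (simp only:)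
    hence "vval (c - (d + c) / 2) = vval (c - d)" using vval_half[of "c - d"] by (simp only:)
    moreover have "c - (d + c) / 2 \<noteq> 0" using dc[OF d] by (simp add: field_simps)
    ultimately have "(d + c) / 2 \<notin> B" using transfer[OF dR DnB[OF d]] by blast
    moreover have "(d + c) / 2 < c" using dc[OF d] by (simp add: field_simps)
    ultimately show ?thesis using inD sf_half[OF R dR c] by blast
  qed
  have Dr: "c + (c - d) \<in> E" if d: "d \<in> D" for d
  proof -
    have dR: "d \<in> R" using d U by blast
    have "c - (c + (c - d)) = - (c - d)" by simp
    hence "vval (c - (c + (c - d))) = vval (c - d)" using vval_neg[of "c - d"] by (simp only:)
    moreover have "c - (c + (c - d)) \<noteq> 0" using dc[OF d] by simp
    ultimately have "c + (c - d) \<notin> B" using transfer[OF dR DnB[OF d]] by blast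
    moreover have "c < c + (c - d)" using dc[OF d] by simp
    ultimately show ?thesis using inE sf_add[OF R c sf_diff[OF R c dR]] by blast
  qed
  have Em: "(e + c) / 2 \<in> E" if e: "e \<in> E" for e
  proof -
    have eR: "e \<in> R" using e U by blast
    have "c - (e + c) / 2 = - ((e - c) / 2)" by (simp add: field_simps)
    hence "vval (c - (e + c) / 2) = vval (- ((e - c) / 2))" by (simp only:)
    also have "\<dots> = vval (e - c)" using vval_half[of "e - c"] vval_neg[of "(e - c)/2"] by (simp only:)
    also have "\<dots> = vval (c - e)" using vval_neg[of "c - e"] by simp
    finally have "vval (c - (e + c) / 2) = vval (c - e)" .
    moreover have "c - (e + c) / 2 \<noteq> 0" using ce[OF e] by (simp add: field_simps)
    ultimately have "(e + c) / 2 \<notin> B" using transfer[OF eR EnB[OF e]] by blast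
    moreover have "c < (e + c) / 2" using ce[OF e] by (simp add: field_simps)
    ultimately show ?thesis using inE sf_half[OF R eR c] by blast
  qed
  have Er: "c - (e - c) \<in> D" if e: "e \<in> E" for e
  proof -
    have eR: "e \<in> R" using e U by blast
    have "c - (c - (e - c)) = - (c - e)" by simp
    hence "vval (c - (c - (e - c))) = vval (c - e)" using vval_neg[of "c - e"] by (simp only:)
    moreover have "c - (c - (e - c)) \<noteq> 0" using ce[OF e] by simp
    ultimately have "c - (e - c) \<notin> B" using transfer[OF eR EnB[OF e]] by blast
    moreover have "c - (e - c) < c" using ce[OF e] by simp
    ultimately show ?thesis using inD sf_diff[OF R c sf_diff[OF R eR c]] by blast
  qed
  have P1: "\<forall>d\<in>D. \<forall>e\<in>E. \<exists>d'\<in>D. \<exists>e'\<in>E. 2 * (e' - d') \<le> e - d"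
  proof (intro ballI)
    fix d e assume d: "d \<in> D" and e: "e \<in> E"
    have "2 * ((e + c) / 2 - (d + c) / 2) \<le> e - d" by (simp add: field_simps)
    thus "\<exists>d'\<in>D. \<exists>e'\<in>E. 2 * (e' - d') \<le> e - d" using Dm[OF d] Em[OF e] by blast
  qed
  have P2: "\<forall>d\<in>D. \<exists>d'\<in>D. \<exists>e\<in>E. \<exists>d''\<in>D. \<exists>n::nat. d < d' \<and> e - d'' \<le> of_nat n * (d' - d)"
  proof
    fix d assume d: "d \<in> D"
    have "d < (d + c) / 2" using dc[OF d] by (simp add: field_simps)
    moreover have "c + (c - d) - d \<le> of_nat 4 * ((d + c) / 2 - d)" by (simp add: field_simps)
    ultimately show "\<exists>d'\<in>D. \<exists>e\<in>E. \<exists>d''\<in>D. \<exists>n::nat. d < d' \<and> e - d'' \<le> of_nat n * (d' - d)"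
      using Dm[OF d] Dr[OF d] d by blast
  qed
  have P3: "\<forall>e\<in>E. \<exists>e'\<in>E. \<exists>e''\<in>E. \<exists>d''\<in>D. \<exists>n::nat. e' < e \<and> e'' - d'' \<le> of_nat n * (e - e')"
  proof
    fix e assume e: "e \<in> E"
    have "(e + c) / 2 < e" using ce[OF e] by (simp add: field_simps)
    moreover have "e - (c - (e - c)) \<le> of_nat 4 * (e - (e + c) / 2)" by (simp add: field_simps)
    ultimately show "\<exists>e'\<in>E. \<exists>e''\<in>E. \<exists>d''\<in>D. \<exists>n::nat. e' < e \<and> e'' - d'' \<le> of_nat n * (e - e')"
      using Em[OF e] Er[OF e] e by blast
  qed
  show ?thesis using P1 P2 P3 by blast
qed


theorem lemma4p1:
  fixes R D E :: "'a::linordered_field set"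
  assumes "subfield R"
    and "D \<subseteq> R" and "E \<subseteq> R" and "D \<noteq> {}" and "E \<noteq> {}"
    and "set_less D E"
    and "(non_ball_cut R D E \<and> Betw UNIV D E \<noteq> {})
         \<or> (\<exists>B. is_ball R B \<and> ball_complement R B D E)"
  shows "\<forall>a\<in>Betw UNIV D E.
           Betw UNIV D E =
           ballV UNIV {\<gamma>\<in>vgroup UNIV. \<forall>\<delta>\<in>vdiff E D. vclass_less \<delta> \<gamma>} a"
proof
  fix a assume a: "a \<in> Betw UNIV D E"
  from assms(7) show "Betw UNIV D E =
           ballV UNIV {\<gamma>\<in>vgroup UNIV. \<forall>\<delta>\<in>vdiff E D. vclass_less \<delta> \<gamma>} a"
  proof
    assume "non_ball_cut R D E \<and> Betw UNIV D E \<noteq> {}"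
    hence nb: "non_ball_cut R D E" by blast
    show ?thesis using core[OF assms(6) nonball_half[OF assms(1) nb] nonball_PD[OF assms(1) nb]
      nonball_PE[OF assms(1) nb] a] .
  next
    assume "\<exists>B. is_ball R B \<and> ball_complement R B D E"
    then obtain B where "is_ball R B" "ball_complement R B D E" by blast
    note P = bc_props[OF assms(1) this]
    show ?thesis using core[OF assms(6) conjunct1[OF P] conjunct1[OF conjunct2[OF P]]
      conjunct2[OF conjunct2[OF P]] a] .
  qed
qed

end
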